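(* The strong substitutes property is not sufficient to guarantee that a Walrasian equilibrium on the original items is a price-match equilibrium: there exists a combinatorial auction in which every bidder's valuation satisfies the strong substitutes property and a Walrasian equilibrium on the original items exists, but no Walrasian equilibrium on the original items is a price-match equilibrium.
   Context: Combinatorial auction: item types $j$ with supply $c_j\in\mathbb Z_{\ge1}$; bidders $\mathcal I$ with valuations $v_i$ on bundles $a\in\mathbb Z^J_{\ge0}$, $a\le c$ (normalized, monotone), expressed as bids (bundle, amount) with at most one accepted bid per bidder; bids are truthful. A feasible allocation assigns disjoint-supply-respecting bundles; $x^*$ is an efficient allocation with bundles $a^{i*}$. Linear prices $p\in\mathbb R^J_{\ge0}$; a Walrasian equilibrium on the original items (no artificial items) is $(x^*,p)$ such that each bidder's bundle $a^{i*}$ maximizes $v_i(a)-p\,a$ over bundles, and $p_j=0$ for any item in excess supply under $x^*$. It is a price-match equilibrium if for every bidder $i$ there is a feasible allocation of bundles to the other bidders (one accepted bid each) such that each of them has value at least the price of her bundle, and the total price of the allocated bundles equals $\sum_{i}p\,a^{i*}$. A valuation satisfies gross substitutes (for unique items) if for price vectors $p\le q$ and any $S$ in the demand set at $p$ there is $T$ in the demand set at $q$ containing every $j\in S$ with $p_j=q_j$; it satisfies strong substitutes if it satisfies gross substitutes when every unit of every item type is treated as a distinct item. *)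

theory Defs
  imports Complex_Main
begin

text \<open>Item types are natural numbers in a finite set J, with supply c j.
  Bidders are natural numbers in a finite set I.  A bundle is a function
  a :: nat \<Rightarrow> nat giving the number of units of each item type.\<close>

definition bundles :: "nat set \<Rightarrow> (nat \<Rightarrow> nat) \<Rightarrow> (nat \<Rightarrow> nat) set" where
  "bundles J c = {a. (\<forall>j. j \<notin> J \<longrightarrow> a j = 0) \<and> (\<forall>j\<in>J. a j \<le> c j)}"

definition valuation :: "nat set \<Rightarrow> (nat \<Rightarrow> nat) \<Rightarrow> ((nat \<Rightarrow> nat) \<Rightarrow> real) \<Rightarrow> bool" where
  "valuation J c v \<longleftrightarrow> v (\<lambda>_. 0) = 0 \<and>
     (\<forall>a\<in>bundles J c. \<forall>b\<in>bundles J c. (\<forall>j. a j \<le> b j) \<longrightarrow> v a \<le> v b)"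

definition feasible :: "nat set \<Rightarrow> (nat \<Rightarrow> nat) \<Rightarrow> nat set \<Rightarrow> (nat \<Rightarrow> nat \<Rightarrow> nat) \<Rightarrow> bool" where
  "feasible J c I x \<longleftrightarrow> (\<forall>i\<in>I. x i \<in> bundles J c) \<and> (\<forall>j\<in>J. (\<Sum>i\<in>I. x i j) \<le> c j)"

definition bprice :: "nat set \<Rightarrow> (nat \<Rightarrow> real) \<Rightarrow> (nat \<Rightarrow> nat) \<Rightarrow> real" where
  "bprice J p a = (\<Sum>j\<in>J. p j * real (a j))"

definition efficient :: "nat set \<Rightarrow> (nat \<Rightarrow> nat) \<Rightarrow> nat set \<Rightarrow> (nat \<Rightarrow> (nat \<Rightarrow> nat) \<Rightarrow> real)
    \<Rightarrow> (nat \<Rightarrow> nat \<Rightarrow> nat) \<Rightarrow> bool" where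
  "efficient J c I v x \<longleftrightarrow> feasible J c I x \<and>
     (\<forall>y. feasible J c I y \<longrightarrow> (\<Sum>i\<in>I. v i (y i)) \<le> (\<Sum>i\<in>I. v i (x i)))"

definition walrasian :: "nat set \<Rightarrow> (nat \<Rightarrow> nat) \<Rightarrow> nat set \<Rightarrow> (nat \<Rightarrow> (nat \<Rightarrow> nat) \<Rightarrow> real)
    \<Rightarrow> (nat \<Rightarrow> nat \<Rightarrow> nat) \<Rightarrow> (nat \<Rightarrow> real) \<Rightarrow> bool" where
  "walrasian J c I v x p \<longleftrightarrow> efficient J c I v x \<and> (\<forall>j\<in>J. 0 \<le> p j) \<and>
     (\<forall>i\<in>I. \<forall>a\<in>bundles J c. v i a - bprice J p a \<le> v i (x i) - bprice J p (x i)) \<and>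
     (\<forall>j\<in>J. (\<Sum>i\<in>I. x i j) < c j \<longrightarrow> p j = 0)"

definition price_match :: "nat set \<Rightarrow> (nat \<Rightarrow> nat) \<Rightarrow> nat set \<Rightarrow> (nat \<Rightarrow> (nat \<Rightarrow> nat) \<Rightarrow> real)
    \<Rightarrow> (nat \<Rightarrow> nat \<Rightarrow> nat) \<Rightarrow> (nat \<Rightarrow> real) \<Rightarrow> bool" where
  "price_match J c I v x p \<longleftrightarrow> walrasian J c I v x p \<and>
     (\<forall>i\<in>I. \<exists>y. feasible J c (I - {i}) y \<and>
        (\<forall>k\<in>I - {i}. bprice J p (y k) \<le> v k (y k)) \<and>
        (\<Sum>k\<in>I - {i}. bprice J p (y k)) = (\<Sum>k\<in>I. bprice J p (x k)))"

text \<open>Gross substitutes for unique items: items form a finite set U,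
  V is a valuation on subsets of U, prices are arbitrary real vectors on U.\<close>
definition demand_set :: "'u set \<Rightarrow> ('u set \<Rightarrow> real) \<Rightarrow> ('u \<Rightarrow> real) \<Rightarrow> 'u set set" where
  "demand_set U V q = {S. S \<subseteq> U \<and>
     (\<forall>T. T \<subseteq> U \<longrightarrow> V T - (\<Sum>u\<in>T. q u) \<le> V S - (\<Sum>u\<in>S. q u))}"

definition gross_substitutes :: "'u set \<Rightarrow> ('u set \<Rightarrow> real) \<Rightarrow> bool" where
  "gross_substitutes U V \<longleftrightarrow>
     (\<forall>p q. (\<forall>u\<in>U. p u \<le> q u) \<longrightarrow>
        (\<forall>S\<in>demand_set U V p. \<exists>T\<in>demand_set U V q. {u\<in>S. p u = q u} \<subseteq> T))"

text \<open>Strong substitutes: gross substitutes when every unit (j,k), k < c j,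
  of every item type j is treated as a distinct item.\<close>
definition units :: "nat set \<Rightarrow> (nat \<Rightarrow> nat) \<Rightarrow> (nat \<times> nat) set" where
  "units J c = {(j, k). j \<in> J \<and> k < c j}"

definition unit_valuation :: "((nat \<Rightarrow> nat) \<Rightarrow> real) \<Rightarrow> (nat \<times> nat) set \<Rightarrow> real" where
  "unit_valuation v S = v (\<lambda>j. card {k. (j, k) \<in> S})"

definition strong_substitutes :: "nat set \<Rightarrow> (nat \<Rightarrow> nat) \<Rightarrow> ((nat \<Rightarrow> nat) \<Rightarrow> real) \<Rightarrow> bool" where
  "strong_substitutes J c v \<longleftrightarrow> gross_substitutes (units J c) (unit_valuation v)"

end

theory Submission
  imports Defs
begin

lemma subs2: "a \<noteq> b \<Longrightarrow> (T \<subseteq> {a,b}) = (T = {} \<or> T = {a} \<or> T = {b} \<or> T = {a,b})"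
  by blast
lemma ds2:
  assumes "a \<noteq> b"
  shows "(T \<in> demand_set {a,b} V q) = ((T = {} \<or> T = {a} \<or> T = {b} \<or> T = {a,b}) \<and>
     V {} \<le> V T - sum q T \<and> V {a} - q a \<le> V T - sum q T \<and> V {b} - q b \<le> V T - sum q T
     \<and> V {a,b} - q a - q b \<le> V T - sum q T)"
proof -
  have A: "(\<forall>T'. T' \<subseteq> {a,b} \<longrightarrow> P T') = (P {} \<and> P {a} \<and> P {b} \<and> P {a,b})" for P
    using subs2[OF assms] by auto
  have B: "sum q {a,b} = q a + q b" using assms by simp
  show ?thesis unfolding demand_set_def mem_Collect_eq A unfolding subs2[OF assms] B
    by (simp add: diff_diff_eq)
qed
lemma gs2:
  assumes ab: "a \<noteq> b" and V: "V {} = 0" "V {a} = x" "V {b} = x" "V {a,b} = y"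
    and xy: "x \<le> y" "y \<le> 2 * x"
  shows "gross_substitutes {a,b} V"
  unfolding gross_substitutes_def
proof (intro allI impI ballI)
  fix p q :: "_ \<Rightarrow> real" and S
  assume le: "\<forall>u\<in>{a,b}. p u \<le> q u" and S: "S \<in> demand_set {a,b} V p"
  have sa: "sum q {a,b} = q a + q b" "sum p {a,b} = p a + p b" using ab by auto
  have pa: "p a \<le> q a" and pb: "p b \<le> q b" using le by auto
  from S have Sc: "(S = {} \<or> S = {a} \<or> S = {b} \<or> S = {a,b}) \<and>
     0 \<le> V S - sum p S \<and> x - p a \<le> V S - sum p S \<and> x - p b \<le> V S - sum p S
     \<and> y - p a - p b \<le> V S - sum p S" unfolding ds2[OF ab] V by simp
  have key: "\<exists>T. (T = {} \<or> T = {a} \<or> T = {b} \<or> T = {a,b}) \<and>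
     0 \<le> V T - sum q T \<and> x - q a \<le> V T - sum q T \<and> x - q b \<le> V T - sum q T
     \<and> y - q a - q b \<le> V T - sum q T \<and> {u\<in>S. p u = q u} \<subseteq> T"
  proof -
    have c: "(T = {} \<or> T = {a} \<or> T = {b} \<or> T = {a,b}) \<Longrightarrow> 
      (0 \<le> V T - sum q T \<and> x - q a \<le> V T - sum q T \<and> x - q b \<le> V T - sum q T
     \<and> y - q a - q b \<le> V T - sum q T \<and> {u\<in>S. p u = q u} \<subseteq> T) \<Longrightarrow> ?thesis" for T by blast
    from Sc consider "S = {}" | "S = {a}" | "S = {b}" | "S = {a,b}" by blast
    then show ?thesis
    proof cases
      case 1
      then show ?thesis using ab V xy
        apply -
        apply (cases "x - q a \<le> 0 \<and> x - q b \<le> 0 \<and> y - q a - q b \<le> 0")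
         apply (rule c[of "{}"]; (simp add: sa subset_iff)?; (smt (verit))?)
        apply (cases "x - q b \<le> x - q a \<and> y - q a - q b \<le> x - q a")
         apply (rule c[of "{a}"]; (simp add: sa subset_iff)?; (smt (verit))?)
        apply (cases "y - q a - q b \<le> x - q b")
         apply (rule c[of "{b}"]; (simp add: sa subset_iff)?; (smt (verit))?)
        apply (rule c[of "{a,b}"]; (simp add: sa subset_iff)?; (smt (verit))?)
        done
    next
      case 2
      then show ?thesis using ab V Sc pa pb xy
        apply -
        apply (cases "p a = q a")
        apply (cases "y - q a - q b \<le> x - q a")
         apply (rule c[of "{a}"]; (simp add: sa subset_iff)?; (smt (verit))?)
         apply (rule c[of "{a,b}"]; (simp add: sa subset_iff)?; (smt (verit))?)
        apply (cases "x - q a \<le> 0 \<and> x - q b \<le> 0 \<and> y - q a - q b \<le> 0")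
         apply (rule c[of "{}"]; (simp add: sa subset_iff)?; (smt (verit))?)
        apply (cases "x - q b \<le> x - q a \<and> y - q a - q b \<le> x - q a")
         apply (rule c[of "{a}"]; (simp add: sa subset_iff)?; (smt (verit))?)
        apply (cases "y - q a - q b \<le> x - q b")
         apply (rule c[of "{b}"]; (simp add: sa subset_iff)?; (smt (verit))?)
        apply (rule c[of "{a,b}"]; (simp add: sa subset_iff)?; (smt (verit))?)
        done
    next
      case 3
      then show ?thesis using ab V Sc pa pb xy
        apply -
        apply (cases "p b = q b")
        apply (cases "y - q a - q b \<le> x - q b")
         apply (rule c[of "{b}"]; (simp add: sa subset_iff)?; (smt (verit))?)
         apply (rule c[of "{a,b}"]; (simp add: sa subset_iff)?; (smt (verit))?)
        apply (cases "x - q a \<le> 0 \<and> x - q b \<le> 0 \<and> y - q a - q b \<le> 0")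
         apply (rule c[of "{}"]; (simp add: sa subset_iff)?; (smt (verit))?)
        apply (cases "x - q b \<le> x - q a \<and> y - q a - q b \<le> x - q a")
         apply (rule c[of "{a}"]; (simp add: sa subset_iff)?; (smt (verit))?)
        apply (cases "y - q a - q b \<le> x - q b")
         apply (rule c[of "{b}"]; (simp add: sa subset_iff)?; (smt (verit))?)
        apply (rule c[of "{a,b}"]; (simp add: sa subset_iff)?; (smt (verit))?)
        done
    next
      case 4
      then show ?thesis using ab V Sc pa pb xy
        apply -
        apply (cases "p a = q a \<and> p b = q b")
         apply (rule c[of "{a,b}"]; (simp add: sa subset_iff)?; (smt (verit))?)
        apply (cases "p a = q a")
        apply (cases "y - q a - q b \<le> x - q a")
         apply (rule c[of "{a}"]; (simp add: sa subset_iff)?; (smt (verit))?)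
         apply (rule c[of "{a,b}"]; (simp add: sa subset_iff)?; (smt (verit))?)
        apply (cases "p b = q b")
        apply (cases "y - q a - q b \<le> x - q b")
         apply (rule c[of "{b}"]; (simp add: sa subset_iff)?; (smt (verit))?)
         apply (rule c[of "{a,b}"]; (simp add: sa subset_iff)?; (smt (verit))?)
        apply (cases "x - q a \<le> 0 \<and> x - q b \<le> 0 \<and> y - q a - q b \<le> 0")
         apply (rule c[of "{}"]; (simp add: sa subset_iff)?; (smt (verit))?)
        apply (cases "x - q b \<le> x - q a \<and> y - q a - q b \<le> x - q a")
         apply (rule c[of "{a}"]; (simp add: sa subset_iff)?; (smt (verit))?)
        apply (cases "y - q a - q b \<le> x - q b")
         apply (rule c[of "{b}"]; (simp add: sa subset_iff)?; (smt (verit))?)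
        apply (rule c[of "{a,b}"]; (simp add: sa subset_iff)?; (smt (verit))?)
        done
    qed
  qed
  then obtain T where T: "(T = {} \<or> T = {a} \<or> T = {b} \<or> T = {a,b}) \<and>
     0 \<le> V T - sum q T \<and> x - q a \<le> V T - sum q T \<and> x - q b \<le> V T - sum q T
     \<and> y - q a - q b \<le> V T - sum q T" and sub: "{u\<in>S. p u = q u} \<subseteq> T" by blast
  have "T \<in> demand_set {a,b} V q" unfolding ds2[OF ab] V using T by simp
  with sub show "\<exists>T\<in>demand_set {a,b} V q. {u \<in> S. p u = q u} \<subseteq> T" by blast
qed


lemma units_ex: "units {0} (\<lambda>_. 2) = {(0,0),(0,1)}"
  unfolding units_def by auto

lemma card_ex:
  "card {k. (j, k) \<in> ({}::(nat\<times>nat) set)} = 0"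
  "card {k. (j, k) \<in> {(0::nat,0::nat)}} = (if j = 0 then 1 else 0)"
  "card {k. (j, k) \<in> {(0::nat,1::nat)}} = (if j = 0 then 1 else 0)"
  "card {k. (j, k) \<in> {(0::nat,0::nat),(0,1)}} = (if j = 0 then 2 else 0)"
proof -
  show "card {k. (j, k) \<in> ({}::(nat\<times>nat) set)} = 0" by simp
  show "card {k. (j, k) \<in> {(0::nat,0::nat)}} = (if j = 0 then 1 else 0)"
    by (cases "j = 0") auto
  show "card {k. (j, k) \<in> {(0::nat,1::nat)}} = (if j = 0 then 1 else 0)"
    by (cases "j = 0") auto
  have "{k. (0, k) \<in> {(0::nat,0::nat),(0,1)}} = {0,1}" by auto
  then show "card {k. (j, k) \<in> {(0::nat,0::nat),(0,1)}} = (if j = 0 then 2 else 0)"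
    by (cases "j = 0") auto
qed

lemma c2: "card {k::nat. k = 0 \<or> k = Suc 0} = 2"
proof -
  have "{k::nat. k = 0 \<or> k = Suc 0} = {0, Suc 0}" by auto
  then show ?thesis by simp
qed

theorem corollary4:
  shows "\<exists>(J::nat set) (c::nat \<Rightarrow> nat) (I::nat set) (v::nat \<Rightarrow> (nat \<Rightarrow> nat) \<Rightarrow> real).
     finite J \<and> (\<forall>j\<in>J. 1 \<le> c j) \<and> finite I \<and>
     (\<forall>i\<in>I. valuation J c (v i) \<and> strong_substitutes J c (v i)) \<and>
     (\<exists>x p. walrasian J c I v x p) \<and>
     (\<forall>x p. walrasian J c I v x p \<longrightarrow> \<not> price_match J c I v x p)"
proof -
  define J :: "nat set" where "J = {0}"
  define c :: "nat \<Rightarrow> nat" where "c = (\<lambda>_. 2)"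
  define I :: "nat set" where "I = {0,1}"
  define v :: "nat \<Rightarrow> (nat \<Rightarrow> nat) \<Rightarrow> real" where
    "v = (\<lambda>i a. if i = 0 then 2 * real (a 0) else (if a 0 = 0 then 0 else 1))"
  have bp: "bprice J p a = p 0 * real (a 0)" for p a unfolding bprice_def J_def by simp
  have bun: "a \<in> bundles J c \<longleftrightarrow> (\<forall>j. j \<noteq> 0 \<longrightarrow> a j = 0) \<and> a 0 \<le> 2" for a
    unfolding bundles_def J_def c_def by auto
  have fea: "feasible J c I x \<longleftrightarrow> x 0 \<in> bundles J c \<and> x 1 \<in> bundles J c \<and> x 0 0 + x 1 0 \<le> 2" for x
    unfolding feasible_def I_def J_def c_def by auto
  have val: "valuation J c (v i)" for i
    unfolding valuation_def v_def by (auto, metis not_le le_0_eq neq0_conv)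
  have ss: "strong_substitutes J c (v i)" if "i \<in> I" for i
  proof -
    have u: "units J c = {(0,0),(0,1)}" unfolding J_def c_def by (rule units_ex)
    have ne: "(0::nat,0::nat) \<noteq> (0,1)" by simp
    show ?thesis
      unfolding strong_substitutes_def u
    proof (cases "i = 0")
      case True
      show "gross_substitutes {(0, 0), (0, 1)} (unit_valuation (v i))"
        by (rule gs2[OF ne, where x=2 and y=4]) (simp_all add: unit_valuation_def card_ex c2 v_def True)
    next
      case False
      show "gross_substitutes {(0, 0), (0, 1)} (unit_valuation (v i))"
        by (rule gs2[OF ne, where x=1 and y=1]) (simp_all add: unit_valuation_def card_ex c2 v_def False)
    qed
  qed
  define x0 :: "nat \<Rightarrow> nat \<Rightarrow> nat" where "x0 = (\<lambda>i j. if i = 0 \<and> j = 0 then 2 else 0)"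
  have fx0: "feasible J c I x0" unfolding fea bun x0_def by simp
  have sumI: "(\<Sum>i\<in>I. f i) = f 0 + f 1" for f :: "nat \<Rightarrow> 'b::comm_monoid_add"
    unfolding I_def by simp
  have effv: "(\<Sum>i\<in>I. v i (y i)) \<le> 4" if "feasible J c I y" for y
    using that unfolding sumI fea v_def by auto
  have w0: "walrasian J c I v x0 (\<lambda>_. 1)"
    unfolding walrasian_def efficient_def
  proof (intro conjI ballI allI impI)
    show "feasible J c I x0" by (rule fx0)
    fix y assume "feasible J c I y"
    then show "(\<Sum>i\<in>I. v i (y i)) \<le> (\<Sum>i\<in>I. v i (x0 i))"
      using effv by (simp add: sumI v_def x0_def)
  next
    fix j assume "j \<in> J" then show "0 \<le> (1::real)" by simp
  next
    fix i a assume "i \<in> I" "a \<in> bundles J c"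
    then show "v i a - bprice J (\<lambda>_. 1) a \<le> v i (x0 i) - bprice J (\<lambda>_. 1) (x0 i)"
      unfolding bp bun I_def v_def x0_def by auto
  next
    fix j assume "j \<in> J" "(\<Sum>i\<in>I. x0 i j) < c j"
    then show "(1::real) = 0" unfolding J_def c_def sumI x0_def by simp
  qed
  have nopm: "\<not> price_match J c I v x p" if W: "walrasian J c I v x p" for x p
  proof
    assume PM: "price_match J c I v x p"
    from W have fx: "feasible J c I x" and opt: "(\<Sum>i\<in>I. v i (x0 i)) \<le> (\<Sum>i\<in>I. v i (x i))"
      unfolding walrasian_def efficient_def using fx0 by auto
    have "(\<Sum>i\<in>I. v i (x0 i)) = 4" by (simp add: sumI v_def x0_def)
    with opt have "2 * real (x 0 0) + (if x 1 0 = 0 then 0 else 1) \<ge> 4"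
      by (simp add: sumI v_def)
    moreover have "x 0 0 + x 1 0 \<le> 2" using fx fea by auto
    ultimately have x00: "x 0 0 = 2" and x10: "x 1 0 = 0"
      by (auto split: if_splits)
    define a1 :: "nat \<Rightarrow> nat" where "a1 = (\<lambda>j. if j = 0 then 1 else 0)"
    have "a1 \<in> bundles J c" unfolding bun a1_def by simp
    with W have "v 1 a1 - bprice J p a1 \<le> v 1 (x 1) - bprice J p (x 1)"
      unfolding walrasian_def I_def by blast
    then have p1: "p 0 \<ge> 1" unfolding bp v_def a1_def using x10 by simp
    from PM obtain y where fy: "feasible J c (I - {0}) y"
      and le: "\<forall>k\<in>I - {0}. bprice J p (y k) \<le> v k (y k)"
      and eq: "(\<Sum>k\<in>I - {0}. bprice J p (y k)) = (\<Sum>k\<in>I. bprice J p (x k))"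
      unfolding price_match_def I_def by auto
    have I0: "I - {0} = {1}" unfolding I_def by auto
    have y2: "y 1 0 \<le> 2" using fy unfolding I0 feasible_def bun by auto
    from eq have "p 0 * real (y 1 0) = 2 * p 0" unfolding I0 sumI bp using x00 x10 by simp
    with p1 have "y 1 0 = 2" by simp
    moreover from le have "p 0 * real (y 1 0) \<le> v 1 (y 1)" unfolding I0 bp by simp
    ultimately show False using p1 by (simp add: v_def)
  qed
  show ?thesis
    apply (rule exI[of _ J], rule exI[of _ c], rule exI[of _ I], rule exI[of _ v])
    using val ss w0 nopm by (auto simp: J_def c_def I_def)
qed

end
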